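(* Let $\mu$ be a probability measure and $\beta:\mathbb R^+\to\mathbb R^+$. Assume that every $f\in\mathcal A$ satisfies $$\int|f-m|\,d\mu\le\beta(s)\int\sqrt{\Gamma(f)}\,d\mu+s\,\mathrm{Osc}(f)\qquad\forall s\in(0,1),$$ where $m$ is a median of $f$ under $\mu$. Then every $f\in\mathcal A$ satisfies $$\mathrm{Var}_\mu(f)\le4\beta\Big(\frac s2\Big)^2\int\Gamma(f)\,d\mu+s\,\mathrm{Osc}(f)^2\qquad\forall s\in(0,1/4).$$
   Context: Standing framework: $\mu$ a probability measure on a Polish space $E$, $L$ a $\mu$-symmetric diffusion operator with an algebra $\mathcal A$ of bounded functions containing constants, and carré du champ $\Gamma(f)=\Gamma(f,f)$ where $\Gamma(f,g)=\frac12(L(fg)-fLg-gLf)$, satisfying the chain rule (in particular $\Gamma(f^2)=4f^2\Gamma(f)$). $\mathrm{Osc}(f)=\operatorname{ess\,sup}f-\operatorname{ess\,inf}f$. *)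

theory Defs
  imports "HOL-Probability.Probability"
begin

definition ess_sup :: "'a measure \<Rightarrow> ('a \<Rightarrow> real) \<Rightarrow> ereal" where
  "ess_sup M f = esssup M (\<lambda>x. ereal (f x))"

definition ess_inf :: "'a measure \<Rightarrow> ('a \<Rightarrow> real) \<Rightarrow> ereal" where
  "ess_inf M f = - esssup M (\<lambda>x. ereal (- f x))"

definition Osc :: "'a measure \<Rightarrow> ('a \<Rightarrow> real) \<Rightarrow> real" where
  "Osc M f = real_of_ereal (ess_sup M f - ess_inf M f)"

definition median :: "'a measure \<Rightarrow> ('a \<Rightarrow> real) \<Rightarrow> real \<Rightarrow> bool" where
  "median M f m \<longleftrightarrow> measure M {x \<in> space M. f x \<ge> m} \<ge> 1/2
                   \<and> measure M {x \<in> space M. f x \<le> m} \<ge> 1/2"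

definition carre_du_champ ::
  "(('a \<Rightarrow> real) \<Rightarrow> ('a \<Rightarrow> real)) \<Rightarrow> ('a \<Rightarrow> real) \<Rightarrow> ('a \<Rightarrow> real) \<Rightarrow> ('a \<Rightarrow> real)" where
  "carre_du_champ L f g = (\<lambda>x. (L (\<lambda>y. f y * g y) x - f x * L g x - g x * L f x) / 2)"

abbreviation Gamma :: "(('a \<Rightarrow> real) \<Rightarrow> ('a \<Rightarrow> real)) \<Rightarrow> ('a \<Rightarrow> real) \<Rightarrow> ('a \<Rightarrow> real)" where
  "Gamma L f \<equiv> carre_du_champ L f f"

definition smooth_fun :: "(real \<Rightarrow> real) \<Rightarrow> bool" where
  "smooth_fun \<Phi> \<longleftrightarrow> (\<forall>n. (deriv ^^ n) \<Phi> differentiable_on UNIV)"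

definition diffusion_framework ::
  "'a::polish_space measure \<Rightarrow> ('a \<Rightarrow> real) set \<Rightarrow> (('a \<Rightarrow> real) \<Rightarrow> ('a \<Rightarrow> real)) \<Rightarrow> bool" where
  "diffusion_framework M A L \<longleftrightarrow>
     prob_space M \<and> sets M = sets borel \<and>
     (\<forall>f\<in>A. f \<in> borel_measurable M \<and> (\<exists>C. \<forall>x. \<bar>f x\<bar> \<le> C)) \<and>
     (\<forall>c. (\<lambda>x. c) \<in> A) \<and>
     (\<forall>f\<in>A. \<forall>g\<in>A. (\<lambda>x. f x + g x) \<in> A \<and> (\<lambda>x. f x * g x) \<in> A) \<and>
     (\<forall>c. \<forall>f\<in>A. (\<lambda>x. c * f x) \<in> A) \<and>
     (\<forall>f\<in>A. L f \<in> A) \<and>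
     (\<forall>f\<in>A. \<forall>g\<in>A. \<forall>a b. L (\<lambda>x. a * f x + b * g x) = (\<lambda>x. a * L f x + b * L g x)) \<and>
     (\<forall>f\<in>A. \<forall>g\<in>A. (\<integral>x. f x * L g x \<partial>M) = (\<integral>x. g x * L f x \<partial>M)) \<and>
     (\<forall>f\<in>A. \<forall>x. Gamma L f x \<ge> 0) \<and>
     (\<forall>f\<in>A. \<forall>\<Phi>. smooth_fun \<Phi> \<longrightarrow>
        (\<lambda>x. \<Phi> (f x)) \<in> A \<and>
        L (\<lambda>x. \<Phi> (f x)) = (\<lambda>x. deriv \<Phi> (f x) * L f x + (deriv ^^ 2) \<Phi> (f x) * Gamma L f x))"

end

theory Submission
  imports Defs
begin


lemma rpf_deriv:
  assumes "real_polynomial_function p"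
  obtains p' where "real_polynomial_function p'" "\<And>x. (p has_real_derivative p' x) (at x)" "deriv p = p'"
proof -
  obtain p' where "real_polynomial_function p'" "\<And>x. (p has_real_derivative p' x) (at x)"
    using has_real_derivative_polynomial_function[OF assms] by blast
  moreover then have "deriv p = p'" by (intro ext DERIV_imp_deriv) auto
  ultimately show ?thesis using that by blast
qed

lemma rpf_smooth:
  assumes "real_polynomial_function p"
  shows "smooth_fun p"
proof -
  have "real_polynomial_function ((deriv ^^ n) p)" for n
  proof (induction n)
    case 0 then show ?case using assms by simp
  next
    case (Suc n)
    then obtain q where "real_polynomial_function q" "deriv ((deriv ^^ n) p) = q"
      using rpf_deriv by metis
    then show ?case by simp
  qed
  then show ?thesis unfolding smooth_fun_def
    using differentiable_on_real_polynomial_function by blast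
qed

lemma approx_poly:
  fixes R d :: real
  assumes "0 < R" "0 < d"
  obtains P P1 where "real_polynomial_function P" "real_polynomial_function P1"
    "\<And>u. (P has_real_derivative P1 u) (at u)" "P 0 = 0"
    "\<And>u. -R \<le> u \<Longrightarrow> u \<le> R \<Longrightarrow> 2 * \<bar>u\<bar> \<le> P1 u \<and> P1 u \<le> 2 * \<bar>u\<bar> + 2 * d"
proof -
  have "continuous_on {-R..R} (\<lambda>x::real. 2*\<bar>x\<bar>)" by (intro continuous_intros)
  then obtain Q where Q: "real_polynomial_function Q" "\<And>x. x \<in> {-R..R} \<Longrightarrow> \<bar>2*\<bar>x\<bar> - Q x\<bar> < d"
    using Stone_Weierstrass_real_polynomial_function[of "{-R..R}" "\<lambda>x. 2*\<bar>x\<bar>" d] assms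
    by auto
  then obtain a n where an: "Q = (\<lambda>x. \<Sum>i\<le>n. a i * x^i)"
    using real_polynomial_function_iff_sum by metis
  define P where "P = (\<lambda>x::real. (\<Sum>i\<le>n. a i * x^(Suc i) / real (Suc i)) + d * x)"
  define P1 where "P1 = (\<lambda>x. Q x + d)"
  have "real_polynomial_function P" unfolding P_def
    by (intro real_polynomial_function_sum real_polynomial_function_divide real_polynomial_function_power
      real_polynomial_function.intros) (auto intro: real_polynomial_function.intros)
  moreover have "real_polynomial_function P1" unfolding P1_def
    using Q(1) by (auto intro: real_polynomial_function.intros)
  moreover have "(P has_real_derivative P1 u) (at u)" for u
  proof -
    have "((\<lambda>x. a i * x^(Suc i) / real (Suc i)) has_real_derivative a i * u^i) (at u)" for i
    proof -
      have "((\<lambda>x. x^(Suc i)) has_real_derivative real (Suc i) * u^i) (at u)"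
        using DERIV_pow[of "Suc i" u] by simp
      from DERIV_cdivide[OF DERIV_cmult[OF this, of "a i"], of "real (Suc i)"]
      have "((\<lambda>x. a i * x^(Suc i) / real (Suc i)) has_real_derivative a i * (real (Suc i) * u^i) / real (Suc i)) (at u)" .
      moreover have "a i * (real (Suc i) * u^i) / real (Suc i) = a i * u^i" by (simp del: of_nat_Suc)
      ultimately show ?thesis by simp
    qed
    then have "((\<lambda>x. \<Sum>i\<le>n. a i * x^(Suc i) / real (Suc i)) has_real_derivative (\<Sum>i\<le>n. a i * u^i)) (at u)"
      by (intro DERIV_sum) auto
    from DERIV_add[OF this DERIV_cmult[OF DERIV_ident, of d]]
    show ?thesis unfolding P_def P1_def an by simp
  qed
  moreover have "P 0 = 0" unfolding P_def by simp
  moreover have "2 * \<bar>u\<bar> \<le> P1 u \<and> P1 u \<le> 2 * \<bar>u\<bar> + 2 * d" if "-R \<le> u" "u \<le> R" for u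
    using Q(2)[of u] that unfolding P1_def by auto
  ultimately show ?thesis using that by blast
qed

lemma P_props:
  fixes P P1 :: "real \<Rightarrow> real"
  assumes der: "\<And>u. (P has_real_derivative P1 u) (at u)" and P0: "P 0 = 0"
   and bnd: "\<And>u. -R \<le> u \<Longrightarrow> u \<le> R \<Longrightarrow> 2 * \<bar>u\<bar> \<le> P1 u \<and> P1 u \<le> 2 * \<bar>u\<bar> + 2 * d"
  shows "0 \<le> u \<Longrightarrow> u \<le> R \<Longrightarrow> u\<^sup>2 \<le> P u \<and> P u \<le> u\<^sup>2 + 2 * d * u"
    and "-R \<le> u \<Longrightarrow> u \<le> 0 \<Longrightarrow> - u\<^sup>2 + 2 * d * u \<le> P u \<and> P u \<le> - u\<^sup>2"
    and "-R \<le> u \<Longrightarrow> u \<le> v \<Longrightarrow> v \<le> R \<Longrightarrow> P u \<le> P v"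
proof -
  assume u: "0 \<le> u" "u \<le> R"
  have a: "(\<lambda>x. P x - x\<^sup>2) 0 \<le> (\<lambda>x. P x - x\<^sup>2) u"
  proof (rule DERIV_nonneg_imp_nondecreasing[OF u(1)])
    fix x assume x: "0 \<le> x" "x \<le> u"
    show "\<exists>y. ((\<lambda>x. P x - x\<^sup>2) has_real_derivative y) (at x) \<and> 0 \<le> y"
      using bnd[of x] x u der[of x]
      by (intro exI[of _ "P1 x - 2 * x"]) (auto intro!: derivative_eq_intros)
  qed
  have b: "(\<lambda>x. x\<^sup>2 + 2 * d * x - P x) 0 \<le> (\<lambda>x. x\<^sup>2 + 2 * d * x - P x) u"
  proof (rule DERIV_nonneg_imp_nondecreasing[OF u(1)])
    fix x assume x: "0 \<le> x" "x \<le> u"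
    show "\<exists>y. ((\<lambda>x. x\<^sup>2 + 2 * d * x - P x) has_real_derivative y) (at x) \<and> 0 \<le> y"
      using bnd[of x] x u der[of x]
      by (intro exI[of _ "2 * x + 2 * d - P1 x"]) (auto intro!: derivative_eq_intros)
  qed
  show "u\<^sup>2 \<le> P u \<and> P u \<le> u\<^sup>2 + 2 * d * u" using a b P0 by simp
next
  assume u: "-R \<le> u" "u \<le> 0"
  have a: "(\<lambda>x. P x + x\<^sup>2) u \<le> (\<lambda>x. P x + x\<^sup>2) 0"
  proof (rule DERIV_nonneg_imp_nondecreasing[OF u(2)])
    fix x assume x: "u \<le> x" "x \<le> 0"
    show "\<exists>y. ((\<lambda>x. P x + x\<^sup>2) has_real_derivative y) (at x) \<and> 0 \<le> y"
      using bnd[of x] x u der[of x]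
      by (intro exI[of _ "P1 x + 2 * x"]) (auto intro!: derivative_eq_intros)
  qed
  have b: "(\<lambda>x. 2 * d * x - x\<^sup>2 - P x) u \<le> (\<lambda>x. 2 * d * x - x\<^sup>2 - P x) 0"
  proof (rule DERIV_nonneg_imp_nondecreasing[OF u(2)])
    fix x assume x: "u \<le> x" "x \<le> 0"
    show "\<exists>y. ((\<lambda>x. 2 * d * x - x\<^sup>2 - P x) has_real_derivative y) (at x) \<and> 0 \<le> y"
      using bnd[of x] x u der[of x]
      by (intro exI[of _ "2 * d - 2 * x - P1 x"]) (auto intro!: derivative_eq_intros)
  qed
  show "- u\<^sup>2 + 2 * d * u \<le> P u \<and> P u \<le> - u\<^sup>2" using a b P0 by simp
next
  assume uv: "-R \<le> u" "u \<le> v" "v \<le> R"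
  show "P u \<le> P v"
  proof (rule DERIV_nonneg_imp_nondecreasing[OF uv(2)])
    fix x assume x: "u \<le> x" "x \<le> v"
    show "\<exists>y. (P has_real_derivative y) (at x) \<and> 0 \<le> y"
      using bnd[of x] x uv der[of x] by (intro exI[of _ "P1 x"]) auto
  qed
qed

lemma gamma_comp:
  assumes frame: "diffusion_framework M A L" and f: "f \<in> A" and Phi: "real_polynomial_function \<Phi>"
  obtains \<Phi>1 where "real_polynomial_function \<Phi>1" "\<And>u. (\<Phi> has_real_derivative \<Phi>1 u) (at u)"
    "(\<lambda>x. \<Phi> (f x)) \<in> A" "Gamma L (\<lambda>x. \<Phi> (f x)) = (\<lambda>x. (\<Phi>1 (f x))\<^sup>2 * Gamma L f x)"
proof -
  have chain: "\<And>\<Phi>. smooth_fun \<Phi> \<Longrightarrow> (\<lambda>x. \<Phi> (f x)) \<in> A \<and>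
        L (\<lambda>x. \<Phi> (f x)) = (\<lambda>x. deriv \<Phi> (f x) * L f x + (deriv ^^ 2) \<Phi> (f x) * Gamma L f x)"
    using frame f unfolding diffusion_framework_def by blast
  obtain \<Phi>1 where P1: "real_polynomial_function \<Phi>1" "\<And>u. (\<Phi> has_real_derivative \<Phi>1 u) (at u)" "deriv \<Phi> = \<Phi>1"
    using rpf_deriv[OF Phi] by metis
  obtain \<Phi>2 where P2: "real_polynomial_function \<Phi>2" "\<And>u. (\<Phi>1 has_real_derivative \<Phi>2 u) (at u)" "deriv \<Phi>1 = \<Phi>2"
    using rpf_deriv[OF P1(1)] by metis
  define \<Psi> where "\<Psi> = (\<lambda>t. \<Phi> t * \<Phi> t)"
  have Psi: "real_polynomial_function \<Psi>" unfolding \<Psi>_def using Phi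
    by (auto intro: real_polynomial_function.intros)
  have d1: "deriv \<Psi> = (\<lambda>t. 2 * \<Phi> t * \<Phi>1 t)"
    by (rule ext, rule DERIV_imp_deriv) (auto simp: \<Psi>_def intro!: derivative_eq_intros P1(2))
  have d2: "deriv (deriv \<Psi>) = (\<lambda>t. 2 * (\<Phi>1 t)\<^sup>2 + 2 * \<Phi> t * \<Phi>2 t)"
    unfolding d1
    by (rule ext, rule DERIV_imp_deriv) (auto simp: power2_eq_square intro!: derivative_eq_intros P1(2) P2(2))
  have s1: "smooth_fun \<Phi>" by (rule rpf_smooth[OF Phi])
  have s2: "smooth_fun \<Psi>" by (rule rpf_smooth[OF Psi])
  have inA: "(\<lambda>x. \<Phi> (f x)) \<in> A" using chain[OF s1] by blast
  have L1: "L (\<lambda>x. \<Phi> (f x)) = (\<lambda>x. \<Phi>1 (f x) * L f x + \<Phi>2 (f x) * Gamma L f x)"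
    using chain[OF s1] P1(3) P2(3) by (simp add: numeral_2_eq_2)
  have L2: "L (\<lambda>x. \<Phi> (f x) * \<Phi> (f x)) = (\<lambda>x. 2 * \<Phi> (f x) * \<Phi>1 (f x) * L f x
          + (2 * (\<Phi>1 (f x))\<^sup>2 + 2 * \<Phi> (f x) * \<Phi>2 (f x)) * Gamma L f x)"
    using chain[OF s2] d1 d2 by (simp add: numeral_2_eq_2 \<Psi>_def)
  have "Gamma L (\<lambda>x. \<Phi> (f x)) = (\<lambda>x. (\<Phi>1 (f x))\<^sup>2 * Gamma L f x)"
    apply (rule ext)
    apply (subst carre_du_champ_def[of L "\<lambda>x. \<Phi> (f x)"])
    unfolding L1 L2 by (simp add: field_simps power2_eq_square)
  then show ?thesis using that P1 inA by blast
qed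

lemma ess_bounded:
  assumes "prob_space M" "g \<in> borel_measurable M" "\<And>x. \<bar>g x\<bar> \<le> C"
  obtains B where "esssup M (\<lambda>x. ereal (g x)) = ereal B" "AE x in M. g x \<le> B"
    "\<And>c. (AE x in M. g x \<le> c) \<Longrightarrow> B \<le> c"
proof -
  define E where "E = esssup M (\<lambda>x. ereal (g x))"
  have meas: "(\<lambda>x. ereal (g x)) \<in> borel_measurable M" using assms(2) by measurable
  have "E \<le> ereal C" unfolding E_def
    by (rule esssup_I[OF meas]) (use assms(3) abs_le_D1 in auto)
  moreover have "ereal (-C) \<le> E"
  proof -
    have "emeasure M (space M) \<noteq> 0" using prob_space.emeasure_space_1[OF assms(1)] by simp
    then have "esssup M (\<lambda>x. ereal (-C)) = ereal (-C)" by (rule esssup_const)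
    moreover have "esssup M (\<lambda>x. ereal (-C)) \<le> E" unfolding E_def
    proof (rule esssup_mono)
      fix x show "ereal (- C) \<le> ereal (g x)" using assms(3)[of x] by simp
    qed simp
    ultimately show ?thesis by simp
  qed
  ultimately obtain B where B: "E = ereal B" by (cases E) auto
  have "AE x in M. g x \<le> B"
    using esssup_AE[of "\<lambda>x. ereal (g x)" M] unfolding E_def[symmetric] B by simp
  moreover have "B \<le> c" if "AE x in M. g x \<le> c" for c
  proof -
    have "E \<le> ereal c" unfolding E_def by (rule esssup_I[OF meas]) (use that in auto)
    then show ?thesis using B by simp
  qed
  ultimately show ?thesis using that[of B] B E_def by simp
qed

lemma osc_bounds:
  assumes "prob_space M" "g \<in> borel_measurable M" "\<And>x. \<bar>g x\<bar> \<le> C"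
  obtains a b where "AE x in M. g x \<le> b" "AE x in M. a \<le> g x" "Osc M g = b - a"
    "\<And>c. (AE x in M. g x \<le> c) \<Longrightarrow> b \<le> c" "\<And>c. (AE x in M. c \<le> g x) \<Longrightarrow> c \<le> a"
proof -
  obtain B1 where B1: "esssup M (\<lambda>x. ereal (g x)) = ereal B1" "AE x in M. g x \<le> B1"
    "\<And>c. (AE x in M. g x \<le> c) \<Longrightarrow> B1 \<le> c"
    using ess_bounded[OF assms] by blast
  have m2: "(\<lambda>x. - g x) \<in> borel_measurable M" using assms(2) by measurable
  obtain B2 where B2: "esssup M (\<lambda>x. ereal (- g x)) = ereal B2" "AE x in M. - g x \<le> B2"
    "\<And>c. (AE x in M. - g x \<le> c) \<Longrightarrow> B2 \<le> c"
    using ess_bounded[OF assms(1) m2, of C] assms(3) by auto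
  have "Osc M g = B1 - (- B2)" unfolding Osc_def ess_sup_def ess_inf_def B1(1) B2(1) by simp
  moreover have "AE x in M. - B2 \<le> g x" using B2(2) by auto
  moreover have "c \<le> - B2" if "AE x in M. c \<le> g x" for c
    using B2(3)[of "-c"] that by (auto elim: eventually_mono)
  ultimately show ?thesis using that B1 by blast
qed

lemma inv_mono: "n \<le> k \<Longrightarrow> 1 / real (Suc k) \<le> 1 / real (Suc n)"
  by (simp add: frac_le)

lemma median_exists:
  assumes PS: "prob_space M" and fm: "f \<in> borel_measurable M" and fb: "\<And>x. \<bar>f x\<bar> \<le> C"
  shows "\<exists>m. median M f m"
proof -
  interpret prob_space M by (rule PS)
  define F where "F t = measure M {x\<in>space M. f x \<le> t}" for t
  define S where "S = {t. F t \<ge> 1/2}"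
  have sets: "{x\<in>space M. f x \<le> t} \<in> sets M" for t using fm by measurable
  have sets2: "{x\<in>space M. f x < t} \<in> sets M" for t using fm by measurable
  have Fmono: "F t \<le> F t'" if "t \<le> t'" for t t' unfolding F_def
    by (rule finite_measure_mono) (use that sets in auto)
  have "{x\<in>space M. f x \<le> \<bar>C\<bar>} = space M"
    using fb by (auto simp: abs_le_iff) (smt (verit) fb abs_le_D1)
  then have CS: "\<bar>C\<bar> \<in> S" unfolding S_def F_def by (simp add: prob_space)
  have lb: "- \<bar>C\<bar> \<le> t" if "t \<in> S" for t
  proof (rule ccontr)
    assume "\<not> - \<bar>C\<bar> \<le> t"
    then have e: "{x\<in>space M. f x \<le> t} = {}"
      using fb by auto (smt (verit) fb)
    have "F t = 0" unfolding F_def by (simp only: e measure_empty)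
    then show False using that unfolding S_def by simp
  qed
  have ne: "S \<noteq> {}" using CS by blast
  have bb: "bdd_below S" using lb by (auto simp: bdd_below_def)
  define m where "m = Inf S"
  have Fm: "F m \<ge> 1/2"
  proof -
    define A where "A n = {x\<in>space M. f x \<le> m + 1 / real (Suc n)}" for n
    have dec: "decseq A" unfolding A_def decseq_def
    proof (intro allI impI subsetI)
      fix n k x assume "n \<le> k" "x \<in> {x \<in> space M. f x \<le> m + 1 / real (Suc k)}"
      with inv_mono[OF \<open>n \<le> k\<close>] show "x \<in> {x \<in> space M. f x \<le> m + 1 / real (Suc n)}" by auto
    qed
    have "range A \<subseteq> sets M" unfolding A_def using sets by auto
    from finite_Lim_measure_decseq[OF this dec]
    have lim: "(\<lambda>n. measure M (A n)) \<longlonglongrightarrow> measure M (\<Inter>i. A i)" .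
    have "(\<Inter>i. A i) = {x\<in>space M. f x \<le> m}"
    proof (auto simp: A_def)
      fix x assume x: "\<forall>i. f x \<le> m + 1 / (1 + real i)"
      show "f x \<le> m"
      proof (rule ccontr)
        assume "\<not> f x \<le> m"
        then obtain n where "1 / real (Suc n) < f x - m"
          using reals_Archimedean[of "f x - m"] by (auto simp: inverse_eq_divide)
        then show False using x[rule_format, of n] by simp
      qed
    next
      fix x i assume "f x \<le> m" then show "f x \<le> m + 1 / (1 + real i)"
        by (smt (verit) divide_nonneg_nonneg of_nat_0_le_iff)
    qed
    moreover have "1/2 \<le> measure M (A n)" for n
    proof -
      have "Inf S < m + 1 / real (Suc n)" unfolding m_def by simp
      then obtain t where t: "t \<in> S" "t < m + 1 / real (Suc n)"
        using cInf_less_iff[OF ne bb] by blast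
      then have "F t \<le> F (m + 1 / real (Suc n))" by (intro Fmono) simp
      then show ?thesis using t unfolding S_def F_def A_def by simp
    qed
    ultimately show ?thesis using LIMSEQ_le_const[OF lim, of "1/2"] unfolding F_def by auto
  qed
  have Flt: "measure M {x\<in>space M. f x < m} \<le> 1/2"
  proof -
    define B where "B n = {x\<in>space M. f x \<le> m - 1 / real (Suc n)}" for n
    have inc: "incseq B" unfolding B_def incseq_def
    proof (intro allI impI subsetI)
      fix n k x assume "n \<le> k" "x \<in> {x \<in> space M. f x \<le> m - 1 / real (Suc n)}"
      with inv_mono[OF \<open>n \<le> k\<close>] show "x \<in> {x \<in> space M. f x \<le> m - 1 / real (Suc k)}" by auto
    qed
    have "range B \<subseteq> sets M" unfolding B_def using sets by auto
    from finite_Lim_measure_incseq[OF this inc]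
    have lim: "(\<lambda>n. measure M (B n)) \<longlonglongrightarrow> measure M (\<Union>i. B i)" .
    have "(\<Union>i. B i) = {x\<in>space M. f x < m}"
    proof (auto simp: B_def)
      fix x i assume "f x \<le> m - 1 / (1 + real i)" then show "f x < m"
        by (smt (verit) divide_pos_pos of_nat_0_le_iff)
    next
      fix x assume "x \<in> space M" "f x < m"
      then obtain n where "1 / real (Suc n) < m - f x"
        using reals_Archimedean[of "m - f x"] by (auto simp: inverse_eq_divide)
      then show "\<exists>i. f x \<le> m - 1 / (1 + real i)" by (intro exI[of _ n]) simp
    qed
    moreover have "measure M (B n) \<le> 1/2" for n
    proof (rule ccontr)
      assume "\<not> measure M (B n) \<le> 1/2"
      then have "m - 1 / real (Suc n) \<in> S" unfolding S_def F_def B_def by simp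
      then have "m \<le> m - 1 / real (Suc n)" unfolding m_def using cInf_lower[OF _ bb] by blast
      then show False by simp
    qed
    ultimately show ?thesis using LIMSEQ_le_const2[OF lim, of "1/2"] by auto
  qed
  have "{x\<in>space M. m \<le> f x} = space M - {x\<in>space M. f x < m}" by auto
  then have "measure M {x\<in>space M. m \<le> f x} = 1 - measure M {x\<in>space M. f x < m}"
    using finite_measure_compl[OF sets2[of m]] by (simp add: prob_space)
  then show ?thesis using Fm Flt unfolding median_def F_def by (intro exI[of _ m]) simp
qed

lemma amgm:
  fixes B p q u d :: real
  assumes "0\<le>B" "0\<le>q" "0\<le>p" "p \<le> 2*\<bar>u\<bar> + 2*d"
  shows "B*(p*q) \<le> u\<^sup>2/2 + 2*B\<^sup>2*q\<^sup>2 + 2*B*d*q"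
proof -
  have "B*(p*q) \<le> B*((2*\<bar>u\<bar>+2*d)*q)" using assms by (intro mult_left_mono mult_right_mono) auto
  also have "\<dots> = 2*(B*\<bar>u\<bar>*q) + 2*B*d*q" by (simp add: algebra_simps)
  finally have 1: "B*(p*q) \<le> 2*(B*\<bar>u\<bar>*q) + 2*B*d*q" .
  have "(\<bar>u\<bar> - 2*B*q)\<^sup>2 = u\<^sup>2 - 4*(B*\<bar>u\<bar>*q) + 4*(B\<^sup>2*q\<^sup>2)"
    unfolding power2_eq_square by (simp add: algebra_simps abs_mult_self_eq)
  moreover have "0 \<le> (\<bar>u\<bar> - 2*B*q)\<^sup>2" by simp
  ultimately show ?thesis using 1 by linarith
qed

lemma sqrt_bnd: "\<bar>sqrt y\<bar> \<le> 1 + \<bar>y\<bar>"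
proof -
  have "\<bar>y\<bar> \<le> (1 + \<bar>y\<bar>)\<^sup>2" by (simp add: power2_eq_square algebra_simps)
  then have "sqrt \<bar>y\<bar> \<le> sqrt ((1 + \<bar>y\<bar>)\<^sup>2)" by (rule real_sqrt_le_mono)
  then show ?thesis by (simp add: real_sqrt_abs')
qed




theorem mainTheorem20:
  fixes M :: "'a::polish_space measure"
    and A :: "('a \<Rightarrow> real) set"
    and L :: "('a \<Rightarrow> real) \<Rightarrow> ('a \<Rightarrow> real)"
    and \<beta> :: "real \<Rightarrow> real"
  assumes frame: "diffusion_framework M A L"
    and beta_nonneg: "\<forall>s>0. \<beta> s \<ge> 0"
    and hyp: "\<forall>f\<in>A. \<forall>m. median M f m \<longrightarrow> (\<forall>s. 0 < s \<and> s < 1 \<longrightarrow>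
               (\<integral>x. \<bar>f x - m\<bar> \<partial>M)
                 \<le> \<beta> s * (\<integral>x. sqrt (Gamma L f x) \<partial>M) + s * Osc M f)"
  shows "\<forall>f\<in>A. \<forall>s. 0 < s \<and> s < 1/4 \<longrightarrow>
           prob_space.variance M f
             \<le> 4 * (\<beta> (s/2))\<^sup>2 * (\<integral>x. Gamma L f x \<partial>M) + s * (Osc M f)\<^sup>2"
proof (intro ballI allI impI)
  fix f and s :: real assume fA: "f \<in> A" and s: "0 < s \<and> s < 1/4"
  have PS: "prob_space M" using frame unfolding diffusion_framework_def by blast
  interpret prob_space M by (rule PS)
  have Abm: "\<And>h. h \<in> A \<Longrightarrow> h \<in> borel_measurable M \<and> (\<exists>C. \<forall>x. \<bar>h x\<bar> \<le> C)"
    using frame unfolding diffusion_framework_def by blast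
  have Aadd: "\<And>g h. g \<in> A \<Longrightarrow> h \<in> A \<Longrightarrow> (\<lambda>x. g x + h x) \<in> A"
    using frame unfolding diffusion_framework_def by blast
  have Amul: "\<And>g h. g \<in> A \<Longrightarrow> h \<in> A \<Longrightarrow> (\<lambda>x. g x * h x) \<in> A"
    using frame unfolding diffusion_framework_def by blast
  have Acmul: "\<And>c h. h \<in> A \<Longrightarrow> (\<lambda>x. c * h x) \<in> A"
    using frame unfolding diffusion_framework_def by blast
  have AL: "\<And>h. h \<in> A \<Longrightarrow> L h \<in> A"
    using frame unfolding diffusion_framework_def by blast
  have Gpos: "\<And>h x. h \<in> A \<Longrightarrow> 0 \<le> Gamma L h x"
    using frame unfolding diffusion_framework_def by blast
  have intA: "integrable M h" if hA: "h \<in> A" for h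
  proof -
    obtain C where "\<forall>x. \<bar>h x\<bar> \<le> C" using Abm[OF hA] by blast
    then show ?thesis using Abm[OF hA] by (intro integrable_const_bound[of _ C]) auto
  qed
  have GA: "Gamma L h \<in> A" if h: "h \<in> A" for h
  proof -
    have "(\<lambda>x. (1/2) * L (\<lambda>y. h y * h y) x) \<in> A" by (rule Acmul[OF AL[OF Amul[OF h h]]])
    moreover have "(\<lambda>x. (-1) * (h x * L h x)) \<in> A" by (rule Acmul[OF Amul[OF h AL[OF h]]])
    ultimately have "(\<lambda>x. (1/2) * L (\<lambda>y. h y * h y) x + (-1) * (h x * L h x)) \<in> A"
      by (rule Aadd)
    moreover have "Gamma L h = (\<lambda>x. (1/2) * L (\<lambda>y. h y * h y) x + (-1) * (h x * L h x))"
      by (rule ext) (simp add: carre_du_champ_def field_simps)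
    ultimately show ?thesis by simp
  qed
  have sqint: "integrable M (\<lambda>x. sqrt (Gamma L h x))" if h: "h \<in> A" for h
  proof -
    obtain C where C: "\<forall>x. \<bar>Gamma L h x\<bar> \<le> C" using Abm[OF GA[OF h]] by blast
    have m: "(\<lambda>x. sqrt (Gamma L h x)) \<in> borel_measurable M"
      using measurable_compose[OF conjunct1[OF Abm[OF GA[OF h]]] borel_measurable_sqrt] by (simp add: o_def)
    show ?thesis
    proof (rule integrable_const_bound[of _ "1 + C"])
      show "AE x in M. norm (sqrt (Gamma L h x)) \<le> 1 + C"
        using sqrt_bnd C by (auto intro!: AE_I2) (smt (verit) sqrt_bnd)
    qed (rule m)
  qed

  obtain C1 where C1: "\<forall>x. \<bar>f x\<bar> \<le> C1" using Abm[OF fA] by blast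
  define C0 where "C0 = \<bar>C1\<bar> + 1"
  have C0a: "\<bar>f x\<bar> \<le> C0" for x unfolding C0_def using C1[rule_format, of x] by linarith
  have C0b: "0 < C0" unfolding C0_def by simp
  note C0 = C0a C0b
  have fm: "f \<in> borel_measurable M" using Abm[OF fA] by blast
  obtain a b where ab: "AE x in M. f x \<le> b" "AE x in M. a \<le> f x" "Osc M f = b - a"
    "\<And>c. (AE x in M. f x \<le> c) \<Longrightarrow> b \<le> c" "\<And>c. (AE x in M. c \<le> f x) \<Longrightarrow> c \<le> a"
    by (rule osc_bounds[OF PS fm C0(1)]) (rule that)
  have "AE x in M. f x \<le> C0" using abs_le_D1[OF C0(1)] by (intro AE_I2) auto
  then have bC: "b \<le> C0" by (rule ab(4))
  have "AE x in M. -C0 \<le> f x" using abs_le_D2[OF C0(1)] by (intro AE_I2) (simp add: minus_le_iff)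
  then have aC: "- C0 \<le> a" by (rule ab(5))
  obtain m where med: "median M f m" using median_exists[OF PS fm C0(1)] by blast
  have set1: "{x \<in> space M. m \<le> f x} \<in> sets M" using fm by measurable
  have set2: "{x \<in> space M. f x \<le> m} \<in> sets M" using fm by measurable
  have mb: "m \<le> b"
  proof (rule ccontr)
    assume "\<not> m \<le> b"
    have "AE x in M. x \<notin> {x \<in> space M. m \<le> f x}" by (rule eventually_mono[OF ab(1)]) (use \<open>\<not> m \<le> b\<close> in auto)
    then have "prob {x \<in> space M. m \<le> f x} = 0" using prob_eq_0[OF set1] by simp
    then show False using med unfolding median_def by simp
  qed
  have am: "a \<le> m"
  proof (rule ccontr)
    assume "\<not> a \<le> m"
    have "AE x in M. x \<notin> {x \<in> space M. f x \<le> m}" by (rule eventually_mono[OF ab(2)]) (use \<open>\<not> a \<le> m\<close> in auto)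
    then have "prob {x \<in> space M. f x \<le> m} = 0" using prob_eq_0[OF set2] by simp
    then show False using med unfolding median_def by simp
  qed
  define R where "R = 2 * C0"
  have R: "0 < R" using C0 unfolding R_def by simp
  have urng: "- R \<le> f x - m" "f x - m \<le> R" for x
    using abs_le_D1[OF C0(1)[of x]] abs_le_D2[OF C0(1)[of x]] aC bC am mb unfolding R_def by linarith+
  have abR: "- R \<le> a - m" "b - m \<le> R" using aC bC am mb unfolding R_def by auto
  define \<beta>' where "\<beta>' = \<beta> (s/2)"
  have \<beta>'0: "0 \<le> \<beta>'" using beta_nonneg s unfolding \<beta>'_def by simp
  define IG where "IG = (\<integral>x. Gamma L f x \<partial>M)"
  define IS where "IS = (\<integral>x. sqrt (Gamma L f x) \<partial>M)"
  have IS0: "0 \<le> IS" unfolding IS_def using Gpos[OF fA] by (intro integral_nonneg_AE AE_I2) simp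
  define X where "X = (\<integral>x. (f x - m)\<^sup>2 \<partial>M)"
  have intu: "integrable M (\<lambda>x. (f x - m)\<^sup>2)"
  proof (rule integrable_const_bound[of _ "R\<^sup>2"])
    show "AE x in M. norm ((f x - m)\<^sup>2) \<le> R\<^sup>2"
    proof (intro AE_I2)
      fix x have "\<bar>f x - m\<bar> \<le> R" using urng[of x] by auto
      then have "\<bar>f x - m\<bar>\<^sup>2 \<le> R\<^sup>2" by (rule power_mono) simp
      then show "norm ((f x - m)\<^sup>2) \<le> R\<^sup>2" by simp
    qed
  qed (use fm in measurable)
  have core: "X \<le> 4 * \<beta>'\<^sup>2 * IG + s * (b - a)\<^sup>2 + d * (4 * \<beta>' * IS + 2 * s * (b - a))" if d: "0 < d" for d
  proof -
    obtain P P1 where PP: "real_polynomial_function P" "real_polynomial_function P1"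
      "\<And>u. (P has_real_derivative P1 u) (at u)" "P 0 = 0"
      "\<And>u. -R \<le> u \<Longrightarrow> u \<le> R \<Longrightarrow> 2 * \<bar>u\<bar> \<le> P1 u \<and> P1 u \<le> 2 * \<bar>u\<bar> + 2 * d"
      using approx_poly[OF R d] by metis
    note Pa = P_props(1)[where R=R and d=d, OF PP(3) PP(4) PP(5)]
    note Pb = P_props(2)[where R=R and d=d, OF PP(3) PP(4) PP(5)]
    note Pm = P_props(3)[where R=R and d=d, OF PP(3) PP(4) PP(5)]
    define \<Phi> where "\<Phi> = (\<lambda>t. P (t - m))"
    have rpf: "real_polynomial_function \<Phi>"
    proof -
      have "polynomial_function (\<lambda>t::real. t - m)" by (intro polynomial_function_diff) auto
      from real_polynomial_function_compose[OF this PP(1)] show ?thesis unfolding \<Phi>_def by (simp add: o_def)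
    qed
    obtain \<Phi>1 where G: "real_polynomial_function \<Phi>1" "\<And>u. (\<Phi> has_real_derivative \<Phi>1 u) (at u)"
      "(\<lambda>x. \<Phi> (f x)) \<in> A" "Gamma L (\<lambda>x. \<Phi> (f x)) = (\<lambda>x. (\<Phi>1 (f x))\<^sup>2 * Gamma L f x)"
      using gamma_comp[OF frame fA rpf] by metis
    have \<Phi>1eq: "\<Phi>1 u = P1 (u - m)" for u
    proof -
      have "(\<Phi> has_real_derivative P1 (u - m) * 1) (at u)" unfolding \<Phi>_def
        by (rule DERIV_chain2[OF PP(3)]) (auto intro!: derivative_eq_intros)
      then show ?thesis using G(2)[of u] DERIV_unique by fastforce
    qed
    define g where "g = (\<lambda>x. \<Phi> (f x))"
    have gA: "g \<in> A" unfolding g_def by (rule G(3))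
    have gval: "g x = P (f x - m)" for x unfolding g_def \<Phi>_def by simp
    have Gg: "Gamma L g x = (P1 (f x - m))\<^sup>2 * Gamma L f x" for x unfolding g_def G(4) \<Phi>1eq by simp
    have gm: "g \<in> borel_measurable M" using Abm[OF gA] by blast
    have med0: "median M g 0"
    proof -
      have sg1: "{x\<in>space M. 0 \<le> g x} \<in> sets M" using gm by measurable
      have sg2: "{x\<in>space M. g x \<le> 0} \<in> sets M" using gm by measurable
      have "measure M {x\<in>space M. m \<le> f x} \<le> measure M {x\<in>space M. 0 \<le> g x}"
      proof (rule finite_measure_mono[OF _ sg1], safe)
        fix x assume x: "x \<in> space M" "m \<le> f x"
        have "(f x - m)\<^sup>2 \<le> P (f x - m)" using Pa[where u="f x - m"] urng(2)[of x] x(2) by simp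
        then show "0 \<le> g x" unfolding gval using zero_le_power2[of "f x - m"] by linarith
      qed
      moreover have "measure M {x\<in>space M. f x \<le> m} \<le> measure M {x\<in>space M. g x \<le> 0}"
      proof (rule finite_measure_mono[OF _ sg2], safe)
        fix x assume x: "x \<in> space M" "f x \<le> m"
        have "P (f x - m) \<le> - (f x - m)\<^sup>2" using Pb[where u="f x - m"] urng(1)[of x] x(2) by simp
        then show "g x \<le> 0" unfolding gval using zero_le_power2[of "f x - m"] by linarith
      qed
      ultimately show ?thesis using med unfolding median_def by linarith
    qed
    have H: "(\<integral>x. \<bar>g x - 0\<bar> \<partial>M) \<le> \<beta>' * (\<integral>x. sqrt (Gamma L g x) \<partial>M) + s/2 * Osc M g"
      using hyp[rule_format, OF gA med0, of "s/2"] s unfolding \<beta>'_def by simp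
    obtain Cg where Cg: "\<forall>x. \<bar>g x\<bar> \<le> Cg" using Abm[OF gA] by blast
    obtain ag bg where og: "AE x in M. g x \<le> bg" "AE x in M. ag \<le> g x" "Osc M g = bg - ag"
      "\<And>c. (AE x in M. g x \<le> c) \<Longrightarrow> bg \<le> c" "\<And>c. (AE x in M. c \<le> g x) \<Longrightarrow> c \<le> ag"
      using osc_bounds[OF PS gm, of Cg] Cg by metis
    have "AE x in M. g x \<le> P (b - m)"
    proof (rule eventually_mono[OF ab(1)])
      fix x assume "f x \<le> b"
      then show "g x \<le> P (b - m)" unfolding gval using Pm[where u="f x - m" and v="b - m"] urng[of x] abR by simp
    qed
    then have bg: "bg \<le> P (b - m)" by (rule og(4))
    have "AE x in M. P (a - m) \<le> g x"
    proof (rule eventually_mono[OF ab(2)])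
      fix x assume "a \<le> f x"
      then show "P (a - m) \<le> g x" unfolding gval using Pm[where u="a - m" and v="f x - m"] urng[of x] abR by simp
    qed
    then have ag: "P (a - m) \<le> ag" by (rule og(5))
    have Pbm: "P (b - m) \<le> (b - m)\<^sup>2 + 2 * d * (b - m)" using Pa[where u="b - m"] mb abR by simp
    have Pam: "- (a - m)\<^sup>2 + 2 * d * (a - m) \<le> P (a - m)" using Pb[where u="a - m"] am abR by simp
    have "(b - a)\<^sup>2 = (b - m)\<^sup>2 + (a - m)\<^sup>2 + 2 * ((b - m) * (m - a))"
      by (simp add: power2_eq_square algebra_simps)
    moreover have "0 \<le> (b - m) * (m - a)" using mb am by simp
    moreover have "2 * d * (b - m) - 2 * d * (a - m) = 2 * d * (b - a)" by (simp add: algebra_simps)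
    ultimately have Oscg: "Osc M g \<le> (b - a)\<^sup>2 + 2 * d * (b - a)"
      using og(3) bg ag Pbm Pam by linarith
    have I1: "X \<le> (\<integral>x. \<bar>g x - 0\<bar> \<partial>M)"
      unfolding X_def
    proof (rule integral_mono[OF intu])
      show "integrable M (\<lambda>x. \<bar>g x - 0\<bar>)" using intA[OF gA] by simp
    next
      fix x assume "x \<in> space M"
      show "(f x - m)\<^sup>2 \<le> \<bar>g x - 0\<bar>"
      proof (cases "m \<le> f x")
        case True
        then have "(f x - m)\<^sup>2 \<le> P (f x - m)" using Pa[where u="f x - m"] urng[of x] by simp
        then show ?thesis unfolding gval using abs_ge_self[of "P (f x - m)"] by linarith
      next
        case False
        then have "P (f x - m) \<le> - (f x - m)\<^sup>2" using Pb[where u="f x - m"] urng[of x] by simp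
        then show ?thesis unfolding gval using abs_ge_minus_self[of "P (f x - m)"] by linarith
      qed
    qed
    have intr: "integrable M (\<lambda>x. (f x - m)\<^sup>2 / 2 + 2 * \<beta>'\<^sup>2 * Gamma L f x + 2 * \<beta>' * d * sqrt (Gamma L f x))"
      using intu intA[OF GA[OF fA]] sqint[OF fA] by simp
    have "\<beta>' * (\<integral>x. sqrt (Gamma L g x) \<partial>M) = (\<integral>x. \<beta>' * sqrt (Gamma L g x) \<partial>M)" by simp
    also have "\<dots> \<le> (\<integral>x. (f x - m)\<^sup>2 / 2 + 2 * \<beta>'\<^sup>2 * Gamma L f x + 2 * \<beta>' * d * sqrt (Gamma L f x) \<partial>M)"
    proof (rule integral_mono[OF _ intr])
      show "integrable M (\<lambda>x. \<beta>' * sqrt (Gamma L g x))" using sqint[OF gA] by simp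
    next
      fix x assume "x \<in> space M"
      have p1: "0 \<le> P1 (f x - m)"
        by (rule order_trans[OF _ conjunct1[OF PP(5)[OF urng(1)[of x] urng(2)[of x]]]]) simp
      have p2: "P1 (f x - m) \<le> 2 * \<bar>f x - m\<bar> + 2 * d"
        by (rule conjunct2[OF PP(5)[OF urng(1)[of x] urng(2)[of x]]])
      note p = p1 p2
      have "sqrt (Gamma L g x) = P1 (f x - m) * sqrt (Gamma L f x)"
        unfolding Gg real_sqrt_mult using p(1) by simp
      moreover have "(sqrt (Gamma L f x))\<^sup>2 = Gamma L f x" using Gpos[OF fA] by simp
      moreover have "0 \<le> sqrt (Gamma L f x)" using Gpos[OF fA] by simp
      ultimately show "\<beta>' * sqrt (Gamma L g x) \<le> (f x - m)\<^sup>2 / 2 + 2 * \<beta>'\<^sup>2 * Gamma L f x + 2 * \<beta>' * d * sqrt (Gamma L f x)"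
        using amgm[OF \<beta>'0 _ p(1) p(2), of "sqrt (Gamma L f x)"] by simp
    qed
    also have "\<dots> = X / 2 + 2 * \<beta>'\<^sup>2 * IG + 2 * \<beta>' * d * IS"
      unfolding X_def IG_def IS_def using intu intA[OF GA[OF fA]] sqint[OF fA] by simp
    finally have I2: "\<beta>' * (\<integral>x. sqrt (Gamma L g x) \<partial>M) \<le> X / 2 + 2 * \<beta>'\<^sup>2 * IG + 2 * \<beta>' * d * IS" .
    have I3: "s/2 * Osc M g \<le> s/2 * ((b - a)\<^sup>2 + 2 * d * (b - a))"
      using Oscg s by (intro mult_left_mono) auto
    have e1: "s/2 * ((b - a)\<^sup>2 + 2 * d * (b - a)) = s/2 * (b - a)\<^sup>2 + s * d * (b - a)"
      by (simp add: algebra_simps)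
    have e2: "d * (4 * \<beta>' * IS + 2 * s * (b - a)) = 2 * (2 * \<beta>' * d * IS) + 2 * (s * d * (b - a))"
      by (simp add: algebra_simps)
    have e3: "4 * \<beta>'\<^sup>2 * IG = 2 * (2 * \<beta>'\<^sup>2 * IG)" by simp
    have e4: "s * (b - a)\<^sup>2 = 2 * (s/2 * (b - a)\<^sup>2)" by simp
    show ?thesis using I1 H I2 I3 e1 e2 e3 e4 by linarith
  qed
  have VX: "variance f \<le> X"
  proof -
    have intf: "integrable M f" by (rule intA[OF fA])
    have intf2: "integrable M (\<lambda>x. (f x)\<^sup>2)"
      using intA[OF Amul[OF fA fA]] by (simp add: power2_eq_square)
    have V: "variance f = expectation (\<lambda>x. (f x)\<^sup>2) - (expectation f)\<^sup>2"
      by (rule variance_eq[OF intf intf2])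
    have "X = expectation (\<lambda>x. (f x)\<^sup>2) - 2 * m * expectation f + m\<^sup>2"
      unfolding X_def power2_diff using intf intf2 by (simp add: prob_space)
    moreover have "(expectation f - m)\<^sup>2 = (expectation f)\<^sup>2 - 2 * m * expectation f + m\<^sup>2"
      by (simp add: power2_diff)
    moreover have "0 \<le> (expectation f - m)\<^sup>2" by simp
    ultimately show ?thesis using V by linarith
  qed
  have K0: "0 \<le> 4 * \<beta>' * IS + 2 * s * (b - a)" using \<beta>'0 IS0 am mb s by simp
  have "variance f \<le> 4 * \<beta>'\<^sup>2 * IG + s * (b - a)\<^sup>2"
  proof (rule field_le_epsilon)
    fix e :: real assume e: "0 < e"
    define K where "K = 4 * \<beta>' * IS + 2 * s * (b - a)"
    have K: "0 \<le> K" using K0 unfolding K_def .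
    define d where "d = e / (K + 1)"
    have d: "0 < d" using e K unfolding d_def by simp
    have "d * (K + 1) = e" unfolding d_def using K by simp
    moreover have "d * K \<le> d * (K + 1)" using d by simp
    ultimately have "d * K \<le> e" by simp
    then show "variance f \<le> 4 * \<beta>'\<^sup>2 * IG + s * (b - a)\<^sup>2 + e"
      using core[OF d] VX unfolding K_def by linarith
  qed
  then show "variance f \<le> 4 * (\<beta> (s/2))\<^sup>2 * (\<integral>x. Gamma L f x \<partial>M) + s * (Osc M f)\<^sup>2"
    unfolding \<beta>'_def IG_def ab(3) .
qed


end
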